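(* Assume $q\neq0$. Let $i,j,k,l,r$ be integers with $i+j=k+l$. Then $$u_ih_j-u_kh_l=q^r\left(u_{i-r}h_{j-r}-u_{k-r}h_{l-r}\right)$$ and $$u_iw_j-u_kw_l=q^r\left(u_{i-r}w_{j-r}-u_{k-r}w_{l-r}\right).$$
   Context: Let $p,q,a,b$ be complex numbers with $q\neq0$. The sequence $(u_n)$ is defined by $u_0=0$, $u_1=1$, $u_n=pu_{n-1}-qu_{n-2}$. The Horadam sequence $(w_n)$ is defined by $w_0=a$, $w_1=b$, $w_n=pw_{n-1}-qw_{n-2}$. The Horadam-Lucas sequence $(h_n)$ is defined by $h_0=2b-ap$, $h_1=bp-2aq$, $h_n=ph_{n-1}-qh_{n-2}$. All are extended to all integer indices by $x_{n-2}=(px_{n-1}-x_n)/q$. *)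

theory Defs
  imports Complex_Main
begin

fun seq_pos :: "complex \<Rightarrow> complex \<Rightarrow> complex \<Rightarrow> complex \<Rightarrow> nat \<Rightarrow> complex" where
  "seq_pos p q a b 0 = a"
| "seq_pos p q a b (Suc 0) = b"
| "seq_pos p q a b (Suc (Suc n)) = p * seq_pos p q a b (Suc n) - q * seq_pos p q a b n"

text \<open>seq_neg p q a b n is the value at index -n.\<close>
fun seq_neg :: "complex \<Rightarrow> complex \<Rightarrow> complex \<Rightarrow> complex \<Rightarrow> nat \<Rightarrow> complex" where
  "seq_neg p q a b 0 = a"
| "seq_neg p q a b (Suc 0) = (p * a - b) / q"
| "seq_neg p q a b (Suc (Suc n)) = (p * seq_neg p q a b (Suc n) - seq_neg p q a b n) / q"

definition lin_seq :: "complex \<Rightarrow> complex \<Rightarrow> complex \<Rightarrow> complex \<Rightarrow> int \<Rightarrow> complex" where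
  "lin_seq p q a b n = (if 0 \<le> n then seq_pos p q a b (nat n) else seq_neg p q a b (nat (- n)))"

definition u_seq :: "complex \<Rightarrow> complex \<Rightarrow> int \<Rightarrow> complex" where
  "u_seq p q = lin_seq p q 0 1"

definition horadam :: "complex \<Rightarrow> complex \<Rightarrow> complex \<Rightarrow> complex \<Rightarrow> int \<Rightarrow> complex" where
  "horadam p q a b = lin_seq p q a b"

definition horadam_lucas :: "complex \<Rightarrow> complex \<Rightarrow> complex \<Rightarrow> complex \<Rightarrow> int \<Rightarrow> complex" where
  "horadam_lucas p q a b = lin_seq p q (2 * b - a * p) (b * p - 2 * a * q)"

end

theory Submission
  imports Defs
begin

lemma lin_seq_rec:
  assumes q: "q \<noteq> 0"
  shows "lin_seq p q a b (n + 2) = p * lin_seq p q a b (n + 1) - q * lin_seq p q a b n"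
proof (cases "n \<ge> 0")
  case True
  then obtain k where k: "n = int k" by (metis nonneg_eq_int)
  have "nat (int k + 2) = Suc (Suc k)" "nat (int k + 1) = Suc k" by auto
  then show ?thesis using k by (simp add: lin_seq_def)
next
  case False
  show ?thesis
  proof (cases "n = -1")
    case True
    then show ?thesis using q by (simp add: lin_seq_def field_simps)
  next
    case F2: False
    define k where "k = nat (- n - 2)"
    have k: "n = - int k - 2" using False F2 unfolding k_def by simp
    have e0: "nat (- n) = Suc (Suc k)" using k by simp
    have e1: "lin_seq p q a b n = seq_neg p q a b (Suc (Suc k))"
      using k e0 unfolding lin_seq_def by (simp del: seq_neg.simps)
    have e2: "lin_seq p q a b (n+1) = seq_neg p q a b (Suc k)"
      using k by (simp add: lin_seq_def nat_add_distrib)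
    have e3: "lin_seq p q a b (n+2) = seq_neg p q a b k"
      using k by (simp add: lin_seq_def)
    show ?thesis unfolding e1 e2 e3 seq_neg.simps(3) using q by (simp add: field_simps)
  qed
qed


lemma int_step_induct:
  fixes A :: "int \<Rightarrow> bool"
  assumes "A 0" and "\<And>m. A m \<Longrightarrow> A (m + 1)" and "\<And>m. A m \<Longrightarrow> A (m - 1)"
  shows "A m"
proof (induct m rule: int_induct[where k=0])
  case base then show ?case using assms(1) by simp
next
  case (step1 i) then show ?case using assms(2) by simp
next
  case (step2 i) then show ?case using assms(3) by simp
qed

lemma int_pair_induct:
  fixes A :: "int \<Rightarrow> bool"
  assumes "A 0" and "A 1" and "\<And>m. A m \<Longrightarrow> A (m + 1) \<Longrightarrow> A (m + 2)"
    and "\<And>m. A m \<Longrightarrow> A (m + 1) \<Longrightarrow> A (m - 1)"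
  shows "A m"
proof -
  have "A m \<and> A (m + 1)"
  proof (induct m rule: int_step_induct)
    case 1 then show ?case using assms(1,2) by simp
  next
    case (2 m) then show ?case using assms(3)[of m] by (simp add: add.assoc)
  next
    case (3 m) then show ?case using assms(4)[of m] by simp
  qed
  then show ?thesis by simp
qed

lemma closed1:
  fixes u x :: "int \<Rightarrow> complex"
  assumes ru: "\<And>n. u (n + 2) = p * u (n + 1) - q * u n"
    and rx: "\<And>n. x (n + 2) = p * x (n + 1) - q * x n"
    and u0: "u 0 = 0" and u1: "u 1 = 1"
  shows "u (m + 1) * x (j - m) - q * u m * x (j - m - 1) = x j"
proof -
  define A where "A m = u (m + 1) * x (j - m) - q * u m * x (j - m - 1)" for m
  have step: "A (m + 1) = A m" for m
  proof -
    have h1: "A (m + 1) = u (m + 2) * x (j - m - 1) - q * u (m + 1) * x (j - m - 2)"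
      unfolding A_def by (simp add: algebra_simps)
    have h2: "x (j - m) = p * x (j - m - 1) - q * x (j - m - 2)"
      using rx[of "j - m - 2"] by (simp add: algebra_simps)
    show ?thesis unfolding h1 unfolding A_def ru h2 by (simp add: algebra_simps)
  qed
  have "A m = A 0"
    by (induct m rule: int_step_induct) (simp_all add: step step[of "_ - 1", symmetric])
  then show ?thesis unfolding A_def using u0 u1 by simp
qed


lemma closed_form:
  fixes u x :: "int \<Rightarrow> complex"
  assumes q: "q \<noteq> 0"
    and ru: "\<And>n. u (n + 2) = p * u (n + 1) - q * u n"
    and rx: "\<And>n. x (n + 2) = p * x (n + 1) - q * x n"
    and u0: "u 0 = 0" and u1: "u 1 = 1"
  shows "\<forall>j m. u (i + m) * x (j - m) - u i * x j = q powi i * u m * x (j - m - i)"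
proof (induct i rule: int_pair_induct)
  case 1 then show ?case using u0 by simp
next
  case 2
  show ?case
  proof (intro allI)
    fix j m
    show "u (1 + m) * x (j - m) - u 1 * x j = q powi 1 * u m * x (j - m - 1)"
      using closed1[OF ru rx u0 u1, of m j] u1 by (simp add: algebra_simps)
  qed
next
  case (3 i)
  show ?case
  proof (intro allI)
    fix j m
    have a: "u (i + 2 + m) = p * u (i + 1 + m) - q * u (i + m)"
      using ru[of "i + m"] by (simp add: algebra_simps)
    have b: "u (i + 2) = p * u (i + 1) - q * u i" by (rule ru)
    have c: "x (j - m - i) = p * x (j - m - (i + 1)) - q * x (j - m - (i + 2))"
      using rx[of "j - m - (i + 2)"] by (simp add: algebra_simps)
    have e0: "u (i + m) * x (j - m) - u i * x j = q powi i * u m * x (j - m - i)"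
      using 3(1) by blast
    have e1: "u (i + 1 + m) * x (j - m) - u (i + 1) * x j = q powi (i + 1) * u m * x (j - m - (i + 1))"
      using 3(2) by blast
    have pw1: "q powi (i + 1) = q powi i * q" using q by (simp add: power_int_add power2_eq_square)
    have pw2: "q powi (i + 2) = q powi i * q * q" using q by (simp add: power_int_add power2_eq_square)
    have "u (i + 2 + m) * x (j - m) - u (i + 2) * x j
        = p * (u (i + 1 + m) * x (j - m) - u (i + 1) * x j) - q * (u (i + m) * x (j - m) - u i * x j)"
      unfolding a b by (simp add: algebra_simps)
    also have "\<dots> = q powi i * q * u m * (p * x (j - m - (i + 1)) - x (j - m - i))"
      unfolding e0 e1 pw1 by (simp add: algebra_simps)
    also have "\<dots> = q powi (i + 2) * u m * x (j - m - (i + 2))"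
      unfolding c pw2 by (simp add: algebra_simps)
    finally show "u (i + 2 + m) * x (j - m) - u (i + 2) * x j = q powi (i + 2) * u m * x (j - m - (i + 2))" .
  qed
next
  case (4 i)
  show ?case
  proof (intro allI)
    fix j m
    have a: "u (i - 1 + m) = (p * u (i + m) - u (i + 1 + m)) / q"
      using ru[of "i - 1 + m"] q by (simp add: algebra_simps field_simps)
    have b: "u (i - 1) = (p * u i - u (i + 1)) / q"
      using ru[of "i - 1"] q by (simp add: algebra_simps field_simps)
    have c: "x (j - m - (i - 1)) = p * x (j - m - i) - q * x (j - m - (i + 1))"
      using rx[of "j - m - (i + 1)"] by (simp add: algebra_simps)
    have e0: "u (i + m) * x (j - m) - u i * x j = q powi i * u m * x (j - m - i)"
      using 4(1) by blast
    have e1: "u (i + 1 + m) * x (j - m) - u (i + 1) * x j = q powi (i + 1) * u m * x (j - m - (i + 1))"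
      using 4(2) by blast
    have pw1: "q powi (i + 1) = q powi i * q" using q by (simp add: power_int_add power2_eq_square)
    have pw2: "q powi (i - 1) = q powi i / q" using q by (simp add: power_int_diff)
    have "u (i - 1 + m) * x (j - m) - u (i - 1) * x j
        = (p * (u (i + m) * x (j - m) - u i * x j) - (u (i + 1 + m) * x (j - m) - u (i + 1) * x j)) / q"
      unfolding a b using q by (simp add: field_simps)
    also have "\<dots> = q powi i / q * u m * (p * x (j - m - i) - q * x (j - m - (i + 1)))"
      unfolding e0 e1 pw1 using q by (simp add: field_simps)
    also have "\<dots> = q powi (i - 1) * u m * x (j - m - (i - 1))"
      unfolding c pw2 by (simp add: algebra_simps)
    finally show "u (i - 1 + m) * x (j - m) - u (i - 1) * x j = q powi (i - 1) * u m * x (j - m - (i - 1))" .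
  qed
qed


lemma generic_identity:
  fixes u x :: "int \<Rightarrow> complex"
  assumes q: "q \<noteq> 0"
    and ru: "\<And>n. u (n + 2) = p * u (n + 1) - q * u n"
    and rx: "\<And>n. x (n + 2) = p * x (n + 1) - q * x n"
    and u0: "u 0 = 0" and u1: "u 1 = 1"
    and s: "i + j = k + l"
  shows "u i * x j - u k * x l = q powi r * (u (i - r) * x (j - r) - u (k - r) * x (l - r))"
proof -
  define m where "m = k - i"
  have A: "u (i + m) * x (j - m) - u i * x j = q powi i * u m * x (j - m - i)"
    using closed_form[OF q ru rx u0 u1, of i] by blast
  have B: "u (i - r + m) * x (j - r - m) - u (i - r) * x (j - r) = q powi (i - r) * u m * x (j - r - m - (i - r))"
    using closed_form[OF q ru rx u0 u1, of "i - r"] by blast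
  have k: "i + m = k" "j - m = l" "i - r + m = k - r" "j - r - m = l - r" "j - r - m - (i - r) = j - m - i"
    using s unfolding m_def by auto
  have pw: "q powi i = q powi r * q powi (i - r)" using q by (simp add: power_int_add[symmetric])
  show ?thesis using A B unfolding k pw by (simp add: algebra_simps)
qed

theorem mainTheorem16:
  fixes p q a b :: complex and i j k l r :: int
  assumes "q \<noteq> 0" and "i + j = k + l"
  shows "(u_seq p q i * horadam_lucas p q a b j - u_seq p q k * horadam_lucas p q a b l
           = q powi r * (u_seq p q (i - r) * horadam_lucas p q a b (j - r)
                         - u_seq p q (k - r) * horadam_lucas p q a b (l - r))) \<and>
         (u_seq p q i * horadam p q a b j - u_seq p q k * horadam p q a b l
           = q powi r * (u_seq p q (i - r) * horadam p q a b (j - r)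
                         - u_seq p q (k - r) * horadam p q a b (l - r)))"
proof -
  have ru: "\<And>n. u_seq p q (n + 2) = p * u_seq p q (n + 1) - q * u_seq p q n"
    unfolding u_seq_def by (rule lin_seq_rec[OF assms(1)])
  have u0: "u_seq p q 0 = 0" and u1: "u_seq p q 1 = 1"
    by (simp_all add: u_seq_def lin_seq_def)
  show ?thesis
  proof
    show "u_seq p q i * horadam_lucas p q a b j - u_seq p q k * horadam_lucas p q a b l
           = q powi r * (u_seq p q (i - r) * horadam_lucas p q a b (j - r)
                         - u_seq p q (k - r) * horadam_lucas p q a b (l - r))"
      by (rule generic_identity[OF assms(1) ru _ u0 u1 assms(2)])
         (unfold horadam_lucas_def, rule lin_seq_rec[OF assms(1)])
    show "u_seq p q i * horadam p q a b j - u_seq p q k * horadam p q a b l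
           = q powi r * (u_seq p q (i - r) * horadam p q a b (j - r)
                         - u_seq p q (k - r) * horadam p q a b (l - r))"
      by (rule generic_identity[OF assms(1) ru _ u0 u1 assms(2)])
         (unfold horadam_def, rule lin_seq_rec[OF assms(1)])
  qed
qed

end
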